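(* Let $\mathcal{X}$ and $\mathcal{Y}$ be finite sets, let $\mathcal{M}\subseteq\mathcal{X}\times\mathcal{Y}$ be the set of actual matches, and let $\hat{\mathcal{M}}_H\subseteq\mathcal{X}\times\mathcal{Y}$ be a fixed set (the matches identified by a holdout query algorithm, chosen independently of the validation sample). For $x\in\mathcal{X}$ let $\mathcal{M}(x)$ and $\hat{\mathcal{M}}_H(x)$ be the sets of pairs in $\mathcal{M}$, respectively $\hat{\mathcal{M}}_H$, whose first coordinate is $x$. Let $\hat{\mathcal{X}}_H=\{x\in\mathcal{X}:\hat{\mathcal{M}}_H(x)\ne\emptyset\}$ and $\mathcal{X}'=\{x\in\mathcal{X}:\mathcal{M}(x)\neq\emptyset\}$; define $p_H(x)=|\hat{\mathcal{M}}_H(x)\cap\mathcal{M}(x)|/|\hat{\mathcal{M}}_H(x)|$ for $x\in\hat{\mathcal{X}}_H$ and $r_H(x)=|\hat{\mathcal{M}}_H(x)\cap\mathcal{M}(x)|/|\mathcal{M}(x)|$ for $x\in\mathcal{X}'$, and the query precision and recall $P_H=\frac{1}{|\hat{\mathcal{X}}_H|}\sum_{x\in\hat{\mathcal{X}}_H}p_H(x)$, $R_H=\frac{1}{|\mathcal{X}'|}\sum_{x\in\mathcal{X}'}r_H(x)$. Let $\mathcal{S}_{\mathcal{X}}$ be a sample drawn uniformly at random without replacement from $\mathcal{X}$. Then for any $\delta>0$, with probability at least $1-\delta$, $$P_H\ \ge\ p^-(\hat{\mathcal{X}}_H,\mathcal{S}_{\mathcal{X}}\cap\hat{\mathcal{X}}_H,p_H,0,1,\delta),$$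 and, with probability at least $1-\delta$, $$R_H\ \ge\ p^-(\mathcal{X}',\mathcal{S}_{\mathcal{X}}\cap\mathcal{X}',r_H,0,1,\delta).$$
   Context: PAC bound rules: $p^+$ and $p^-$ are functions which, given a finite set $\mathcal{P}$ (population), a subset $\mathcal{S}\subseteq\mathcal{P}$, a function $f:\mathcal{P}\to\mathbb{R}$, reals $a\le b$ and $\delta>0$, return a real number, and satisfy the following: for every finite set $\mathcal{P}$ with $|\mathcal{P}|=n$, every sample size $s$, and every $f$ with $a\le f(x)\le b$ for all $x\in\mathcal{P}$, if $\mathcal{S}$ is a size-$s$ sample drawn uniformly at random without replacement from $\mathcal{P}$ and $\mu=\frac1n\sum_{x\in\mathcal{P}}f(x)$, then $\Pr\{\mu>p^+(\mathcal{P},\mathcal{S},f,a,b,\delta)\}\le\delta$ and $\Pr\{\mu<p^-(\mathcal{P},\mathcal{S},f,a,b,\delta)\}\le\delta$. *)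

theory Defs
  imports "HOL-Probability.Probability"
begin

definition sample_pmf :: "'a set \<Rightarrow> nat \<Rightarrow> 'a set pmf" where
  "sample_pmf P s = pmf_of_set {S. S \<subseteq> P \<and> card S = s}"

text \<open>The lower half of the PAC bound rule property (the p^- part).\<close>
definition pac_lower_rule ::
  "('a set \<Rightarrow> 'a set \<Rightarrow> ('a \<Rightarrow> real) \<Rightarrow> real \<Rightarrow> real \<Rightarrow> real \<Rightarrow> real) \<Rightarrow> bool" where
  "pac_lower_rule pm \<longleftrightarrow>
     (\<forall>P s f a b \<delta>. finite P \<and> s \<le> card P \<and> a \<le> b \<and> \<delta> > 0 \<and>
        (\<forall>x\<in>P. a \<le> f x \<and> f x \<le> b) \<longrightarrow>
        measure_pmf.prob (sample_pmf P s)
          {S. (\<Sum>x\<in>P. f x) / real (card P) < pm P S f a b \<delta>} \<le> \<delta>)"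

definition matches_of :: "('x \<times> 'y) set \<Rightarrow> 'x \<Rightarrow> ('x \<times> 'y) set" where
  "matches_of M x = {p \<in> M. fst p = x}"

definition matched_set :: "'x set \<Rightarrow> ('x \<times> 'y) set \<Rightarrow> 'x set" where
  "matched_set X M = {x \<in> X. matches_of M x \<noteq> {}}"

definition p_H :: "('x \<times> 'y) set \<Rightarrow> ('x \<times> 'y) set \<Rightarrow> 'x \<Rightarrow> real" where
  "p_H M MH x = real (card (matches_of MH x \<inter> matches_of M x)) / real (card (matches_of MH x))"

definition r_H :: "('x \<times> 'y) set \<Rightarrow> ('x \<times> 'y) set \<Rightarrow> 'x \<Rightarrow> real" where
  "r_H M MH x = real (card (matches_of MH x \<inter> matches_of M x)) / real (card (matches_of M x))"

definition query_precision :: "'x set \<Rightarrow> ('x \<times> 'y) set \<Rightarrow> ('x \<times> 'y) set \<Rightarrow> real" where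
  "query_precision X M MH =
     (\<Sum>x\<in>matched_set X MH. p_H M MH x) / real (card (matched_set X MH))"

definition query_recall :: "'x set \<Rightarrow> ('x \<times> 'y) set \<Rightarrow> ('x \<times> 'y) set \<Rightarrow> real" where
  "query_recall X M MH =
     (\<Sum>x\<in>matched_set X M. r_H M MH x) / real (card (matched_set X M))"

end

theory Submission imports Defs begin

lemma piece:
  assumes fin: "finite X" and AX: "A \<subseteq> X" and ks: "k \<le> s"
  shows "card {S. S \<subseteq> X \<and> card S = s \<and> card (S \<inter> A) = k \<and> Q (S \<inter> A)}
       = card {T. T \<subseteq> A \<and> card T = k \<and> Q T} * (card (X - A) choose (s - k))"
proof -
  let ?L = "{S. S \<subseteq> X \<and> card S = s \<and> card (S \<inter> A) = k \<and> Q (S \<inter> A)}"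
  let ?T = "{T. T \<subseteq> A \<and> card T = k \<and> Q T}"
  let ?R = "{R. R \<subseteq> X - A \<and> card R = s - k}"
  have finA: "finite A" using fin AX finite_subset by blast
  have cs: "card S = card (S \<inter> A) + card (S - A)" if "S \<subseteq> X" for S
    by (metis Diff_Diff_Int Int_commute card_Diff_subset_Int fin finite_subset that
        card_Int_Diff inf.cobounded1)
  have "bij_betw (\<lambda>S. (S \<inter> A, S - A)) ?L (?T \<times> ?R)"
  proof (rule bij_betw_byWitness[where f'="\<lambda>p. fst p \<union> snd p"])
    show "\<forall>a\<in>?L. fst (a \<inter> A, a - A) \<union> snd (a \<inter> A, a - A) = a" by auto
    show "\<forall>a'\<in>?T \<times> ?R. ((fst a' \<union> snd a') \<inter> A, (fst a' \<union> snd a') - A) = a'" by auto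
    show "(\<lambda>S. (S \<inter> A, S - A)) ` ?L \<subseteq> ?T \<times> ?R"
    proof -
      have "(S \<inter> A, S - A) \<in> ?T \<times> ?R" if "S \<in> ?L" for S
        using that cs[of S] by auto
      then show ?thesis by blast
    qed
    show "(\<lambda>p. fst p \<union> snd p) ` (?T \<times> ?R) \<subseteq> ?L"
    proof -
      have "T \<union> R \<in> ?L" if "(T, R) \<in> ?T \<times> ?R" for T R
      proof -
        have h: "T \<subseteq> A" "Q T" "R \<subseteq> X - A" "card R = s - k" "card T = k" using that by auto
        have "card (T \<union> R) = card T + card R"
          by (rule card_Un_disjoint) (use h finA fin in \<open>auto intro: finite_subset\<close>)
        then have "card (T \<union> R) = s" using h ks by simp
        moreover have "(T \<union> R) \<inter> A = T" using h by auto
        ultimately show ?thesis using h AX by auto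
      qed
      then show ?thesis unfolding image_subset_iff by force
    qed
  qed
  then have "card ?L = card (?T \<times> ?R)" by (rule bij_betw_same_card)
  also have "\<dots> = card ?T * card ?R" by (rule card_cartesian_product)
  also have "card ?R = card (X - A) choose (s - k)" using fin by (simp add: n_subsets)
  finally show ?thesis .
qed

lemma count:
  assumes fin: "finite X" and AX: "A \<subseteq> X"
  shows "card {S. S \<subseteq> X \<and> card S = s \<and> Q (S \<inter> A)}
     = (\<Sum>k\<le>s. card {T. T \<subseteq> A \<and> card T = k \<and> Q T} * (card (X - A) choose (s - k)))"
proof -
  let ?P = "\<lambda>k. {S. S \<subseteq> X \<and> card S = s \<and> card (S \<inter> A) = k \<and> Q (S \<inter> A)}"
  have eq: "{S. S \<subseteq> X \<and> card S = s \<and> Q (S \<inter> A)} = (\<Union>k\<in>{..s}. ?P k)"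
  proof (intro equalityI subsetI)
    fix S assume "S \<in> {S. S \<subseteq> X \<and> card S = s \<and> Q (S \<inter> A)}"
    then have "S \<subseteq> X" "card S = s" "Q (S \<inter> A)" by auto
    moreover have "card (S \<inter> A) \<le> card S"
      by (meson \<open>S \<subseteq> X\<close> card_mono fin finite_subset inf.cobounded1)
    ultimately show "S \<in> (\<Union>k\<in>{..s}. ?P k)" by auto
  qed auto
  have finP: "finite (?P k)" for k
    by (rule finite_subset[of _ "Pow X"]) (use fin in auto)
  have "card (\<Union>k\<in>{..s}. ?P k) = (\<Sum>k\<le>s. card (?P k))"
    by (rule card_UN_disjoint) (use finP in auto)
  also have "\<dots> = (\<Sum>k\<le>s. card {T. T \<subseteq> A \<and> card T = k \<and> Q T} * (card (X - A) choose (s - k)))"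
    by (rule sum.cong) (use piece[OF fin AX] in auto)
  finally show ?thesis using eq by simp
qed

lemma key:
  assumes fin: "finite X" and AX: "A \<subseteq> X" and sX: "s \<le> card X" and d: "\<delta> > 0"
    and H: "\<And>k. k \<le> card A \<Longrightarrow> measure_pmf.prob (sample_pmf A k) {T. Q T} \<le> \<delta>"
  shows "measure_pmf.prob (sample_pmf X s) {S. Q (S \<inter> A)} \<le> \<delta>"
proof -
  have finA: "finite A" using fin AX finite_subset by blast
  let ?U = "{S. S \<subseteq> X \<and> card S = s}"
  let ?c = "\<lambda>k. card (X - A) choose (s - k)"
  have Bk: "real (card {T. T \<subseteq> A \<and> card T = k \<and> Q T}) \<le> \<delta> * real (card A choose k)" for k
  proof (cases "k \<le> card A")
    case True
    have ne: "{T. T \<subseteq> A \<and> card T = k} \<noteq> {}"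
      by (metis (mono_tags, lifting) True empty_Collect_eq finA obtain_subset_with_card_n)
    have fV: "finite {T. T \<subseteq> A \<and> card T = k}" using finA by simp
    have "measure_pmf.prob (sample_pmf A k) {T. Q T}
        = real (card ({T. T \<subseteq> A \<and> card T = k} \<inter> {T. Q T})) / real (card A choose k)"
      unfolding sample_pmf_def using measure_pmf_of_set[OF ne fV] finA by (simp add: n_subsets)
    moreover have "{T. T \<subseteq> A \<and> card T = k} \<inter> {T. Q T} = {T. T \<subseteq> A \<and> card T = k \<and> Q T}" by auto
    moreover have "real (card A choose k) > 0" using True by simp
    ultimately show ?thesis using H[OF True] by (simp add: divide_le_eq)
  next
    case False
    have "{T. T \<subseteq> A \<and> card T = k \<and> Q T} = {}"
      using False card_mono[OF finA] by fastforce
    then show ?thesis using d by (simp only: card.empty) simp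
  qed
  have cQ: "real (card {S. S \<subseteq> X \<and> card S = s \<and> Q (S \<inter> A)})
      = (\<Sum>k\<le>s. real (card {T. T \<subseteq> A \<and> card T = k \<and> Q T}) * real (?c k))"
    using count[OF fin AX, of s Q] by simp
  have cU: "real (card ?U) = (\<Sum>k\<le>s. real (card A choose k) * real (?c k))"
    using count[OF fin AX, of s "\<lambda>_. True"] finA by (simp add: n_subsets)
  have le: "real (card {S. S \<subseteq> X \<and> card S = s \<and> Q (S \<inter> A)}) \<le> \<delta> * real (card ?U)"
    unfolding cQ cU sum_distrib_left
    by (rule sum_mono) (use Bk in \<open>auto intro: mult_right_mono simp: mult.assoc[symmetric]\<close>)
  have neU: "?U \<noteq> {}" using sX by (metis (mono_tags, lifting) empty_Collect_eq fin obtain_subset_with_card_n)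
  have fU: "finite ?U" using fin by simp
  have posU: "real (card ?U) > 0" using neU fU by (simp add: card_gt_0_iff)
  have "measure_pmf.prob (sample_pmf X s) {S. Q (S \<inter> A)}
      = real (card (?U \<inter> {S. Q (S \<inter> A)})) / real (card ?U)"
    unfolding sample_pmf_def using measure_pmf_of_set[OF neU fU] by simp
  also have "?U \<inter> {S. Q (S \<inter> A)} = {S. S \<subseteq> X \<and> card S = s \<and> Q (S \<inter> A)}" by auto
  finally show ?thesis using le posU by (simp add: divide_le_eq)
qed

lemma generic:
  assumes fin: "finite X" and PX: "P \<subseteq> X" and sX: "s \<le> card X" and d: "\<delta> > 0"
    and pac: "pac_lower_rule pm"
    and fb: "\<And>x. x \<in> P \<Longrightarrow> 0 \<le> f x \<and> f x \<le> 1"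
  shows "measure_pmf.prob (sample_pmf X s)
           {S. (\<Sum>x\<in>P. f x) / real (card P) \<ge> pm P (S \<inter> P) f 0 1 \<delta>} \<ge> 1 - \<delta>"
proof -
  have finP: "finite P" using fin PX finite_subset by blast
  have "measure_pmf.prob (sample_pmf X s)
           {S. (\<Sum>x\<in>P. f x) / real (card P) < pm P (S \<inter> P) f 0 1 \<delta>} \<le> \<delta>"
  proof (rule key[OF fin PX sX d, where Q="\<lambda>T. (\<Sum>x\<in>P. f x) / real (card P) < pm P T f 0 1 \<delta>"])
    fix k assume "k \<le> card P"
    then show "measure_pmf.prob (sample_pmf P k)
        {T. (\<Sum>x\<in>P. f x) / real (card P) < pm P T f 0 1 \<delta>} \<le> \<delta>"
      using pac finP d fb unfolding pac_lower_rule_def by auto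
  qed
  moreover have "{S. (\<Sum>x\<in>P. f x) / real (card P) \<ge> pm P (S \<inter> P) f 0 1 \<delta>}
      = UNIV - {S. (\<Sum>x\<in>P. f x) / real (card P) < pm P (S \<inter> P) f 0 1 \<delta>}" by auto
  ultimately show ?thesis
    using measure_pmf.prob_compl[of "{S. (\<Sum>x\<in>P. f x) / real (card P) < pm P (S \<inter> P) f 0 1 \<delta>}" "sample_pmf X s"]
    by simp
qed


lemma ratio_bound:
  assumes "finite B"
  shows "0 \<le> real (card (B \<inter> C)) / real (card B) \<and> real (card (B \<inter> C)) / real (card B) \<le> 1"
proof -
  have "card (B \<inter> C) \<le> card B" using assms by (simp add: card_mono)
  then show ?thesis by (cases "card B = 0") (auto simp: divide_le_eq)
qed

theorem theorem4:
  fixes X :: "'x set" and Y :: "'y set" and M MH :: "('x \<times> 'y) set"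
    and pm :: "'x set \<Rightarrow> 'x set \<Rightarrow> ('x \<Rightarrow> real) \<Rightarrow> real \<Rightarrow> real \<Rightarrow> real \<Rightarrow> real"
    and s :: nat and \<delta> :: real
  assumes "finite X" and "finite Y"
    and "M \<subseteq> X \<times> Y" and "MH \<subseteq> X \<times> Y"
    and "pac_lower_rule pm"
    and "s \<le> card X"
    and "\<delta> > 0"
  shows "measure_pmf.prob (sample_pmf X s)
           {S. query_precision X M MH \<ge>
               pm (matched_set X MH) (S \<inter> matched_set X MH) (p_H M MH) 0 1 \<delta>} \<ge> 1 - \<delta> \<and>
         measure_pmf.prob (sample_pmf X s)
           {S. query_recall X M MH \<ge>
               pm (matched_set X M) (S \<inter> matched_set X M) (r_H M MH) 0 1 \<delta>} \<ge> 1 - \<delta>"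
proof -
  have fXY: "finite (X \<times> Y)" using assms(1,2) by simp
  have fin_m: "finite (matches_of N x)" if "N \<subseteq> X \<times> Y" for N and x
    unfolding matches_of_def using that fXY by (auto intro: finite_subset)
  have sub: "matched_set X N \<subseteq> X" for N :: "('x \<times> 'y) set" unfolding matched_set_def by auto
  have pb: "0 \<le> p_H M MH x \<and> p_H M MH x \<le> 1" for x
    unfolding p_H_def by (rule ratio_bound[OF fin_m[OF assms(4)]])
  have rb: "0 \<le> r_H M MH x \<and> r_H M MH x \<le> 1" for x
    unfolding r_H_def using ratio_bound[OF fin_m[OF assms(3)], of x "matches_of MH x"]
    by (simp add: Int_commute)
  show ?thesis
    unfolding query_precision_def query_recall_def
    using generic[OF assms(1) sub assms(6) assms(7) assms(5), of MH "p_H M MH"]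
          generic[OF assms(1) sub assms(6) assms(7) assms(5), of M "r_H M MH"] pb rb
    by blast
qed

end
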